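(* Let $\tau>0$, $\xi>0$, and let $g$ be a scaled Wiener process with scale parameter $\tau$ (increments $g(s_2)-g(s_1)\sim \mathrm{N}(0,\tau^2(s_2-s_1))$) started at $g(0)=g_0>0$, conditioned (in the sense of Doob's $h$-transform) on the event that its first downward crossing of zero, $\inf\{s: g(s)=0\}$, occurs at $s=\xi$. Let $0<s_1<\xi$, write $g_1\equiv g(s_1)$, and put $u=s_1/\xi$. Then the conditional distribution of $g_1$ given $g_0,\xi,\tau$ is the fractional normal distribution $\mathrm{FN}(g_1\mid g_0,\xi,\tau)$, with density on $g_1>0$ $$p(g_1\mid g_0,\xi,\tau)=\frac{\sqrt{2}\,e^{-m^2/2}}{m h^2\sqrt{\pi}}\; g_1\sinh(m g_1/h)\,\exp\Big\{-\frac{g_1^2}{2h^2}\Big\},$$ where $h=\tau\{\xi u(1-u)\}^{1/2}$ and $m=(g_0/\tau)\{(1-u)/(\xi u)\}^{1/2}$.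
   Context: A scaled Wiener process with scale parameter $\tau$ is a continuous Gaussian process with independent increments $g(s_2)-g(s_1)\sim\mathrm{N}(0,\tau^2(s_2-s_1))$ for $s_2\ge s_1$. The conditioning on the first zero-crossing time $\xi$ forces $g>0$ on $(0,\xi)$. *)

theory Defs
  imports "HOL-Analysis.Analysis"
begin

text \<open>Transition density of the scaled Wiener process with scale tau:
  g(s+t) - g(s) ~ N(0, tau^2 t).\<close>
definition wiener_kernel :: "real \<Rightarrow> real \<Rightarrow> real \<Rightarrow> real \<Rightarrow> real" where
  "wiener_kernel tau t x y =
     exp (- ((y - x)^2) / (2 * tau^2 * t)) / (tau * sqrt (2 * pi * t))"

text \<open>Sub-probability transition density (on y > 0) of the scaled Wiener process
  started at x > 0 and killed at its first hitting time of zero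
  (method of images / reflection principle).\<close>
definition killed_kernel :: "real \<Rightarrow> real \<Rightarrow> real \<Rightarrow> real \<Rightarrow> real" where
  "killed_kernel tau t x y = wiener_kernel tau t x y - wiener_kernel tau t x (- y)"

text \<open>Density at time t of the first hitting time of zero, inf {s. g(s) = 0},
  for the scaled Wiener process started at x > 0 (Levy distribution).\<close>
definition first_passage_density :: "real \<Rightarrow> real \<Rightarrow> real \<Rightarrow> real" where
  "first_passage_density tau x t =
     x / (tau * sqrt (2 * pi * t^3)) * exp (- (x^2) / (2 * tau^2 * t))"

text \<open>Doob h-transform: density of g(s1) (at g1) for the process started at g0,
  conditioned on its first zero-crossing occurring at time xi (0 < s1 < xi).\<close>
definition cond_density :: "real \<Rightarrow> real \<Rightarrow> real \<Rightarrow> real \<Rightarrow> real \<Rightarrow> real" where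
  "cond_density tau g0 xi s1 g1 =
     (if 0 < g1 then
        killed_kernel tau s1 g0 g1 * first_passage_density tau g1 (xi - s1)
          / first_passage_density tau g0 xi
      else 0)"

definition FN_density :: "real \<Rightarrow> real \<Rightarrow> real \<Rightarrow> real \<Rightarrow> real \<Rightarrow> real" where
  "FN_density g0 xi tau s1 g1 =
     (let u = s1 / xi;
          h = tau * sqrt (xi * u * (1 - u));
          m = (g0 / tau) * sqrt ((1 - u) / (xi * u))
      in if 0 < g1 then
           sqrt 2 * exp (- (m^2) / 2) / (m * h^2 * sqrt pi)
             * g1 * sinh (m * g1 / h) * exp (- (g1^2) / (2 * h^2))
         else 0)"

end

theory Submission
  imports Defs "HOL-Probability.Probability"
begin

lemma half_int:
  fixes b h :: real assumes b: "0 < b" and h: "0 < h"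
  shows "has_bochner_integral lborel
     (\<lambda>y. indicator {0<..} y * (y * (normal_density b h y - normal_density (-b) h y))) b"
proof -
  define \<phi> where "\<phi> = (\<lambda>y::real. y * (normal_density b h y - normal_density (-b) h y))"
  have "has_bochner_integral lborel (\<lambda>y. normal_density b h y * y - normal_density (-b) h y * y) (b - (-b))"
    by (intro has_bochner_integral_diff normal_moment_nz_1[OF h])
  then have I: "has_bochner_integral lborel \<phi> (2*b)"
    unfolding \<phi>_def by (simp add: algebra_simps)
  have even: "\<phi> (-y) = \<phi> y" for y
    unfolding \<phi>_def normal_density_def by (simp add: power2_commute algebra_simps)
  define \<psi> where "\<psi> = (\<lambda>y. indicator {0<..} y * \<phi> y)"
  define \<psi>' where "\<psi>' = (\<lambda>y. indicator {..<0} y * \<phi> y)"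
  have i1: "integrable lborel \<psi>"
    unfolding \<psi>_def using integrable_mult_indicator[of "{0<..}" lborel \<phi>] has_bochner_integral_iff[of lborel \<phi>] I by simp
  have i2: "integrable lborel \<psi>'"
    unfolding \<psi>'_def using integrable_mult_indicator[of "{..<0}" lborel \<phi>] has_bochner_integral_iff[of lborel \<phi>] I by simp
  have "integral\<^sup>L lborel \<psi>' = integral\<^sup>L lborel (\<lambda>x. \<psi>' (0 + (-1) * x))"
    using lborel_integral_real_affine[of "-1" \<psi>' 0] by simp
  also have "(\<lambda>x. \<psi>' (0 + (-1) * x)) = \<psi>"
    unfolding \<psi>_def \<psi>'_def using even by (auto simp: fun_eq_iff indicator_def)
  finally have e: "integral\<^sup>L lborel \<psi>' = integral\<^sup>L lborel \<psi>" .
  have "\<phi> = (\<lambda>y. \<psi> y + \<psi>' y)"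
    unfolding \<psi>_def \<psi>'_def by (auto simp: fun_eq_iff indicator_def \<phi>_def)
  then have "2*b = integral\<^sup>L lborel \<psi> + integral\<^sup>L lborel \<psi>'"
    using I i1 i2 by (simp add: has_bochner_integral_iff)
  then have "integral\<^sup>L lborel \<psi> = b" using e by simp
  then show ?thesis using i1 unfolding \<psi>_def \<phi>_def
    by (simp add: has_bochner_integral_iff)
qed

lemma expo1:
  fixes tau xi g0 s1 y :: real
  assumes "0 < tau" and "0 < xi" and "0 < g0" and "0 < s1" and "s1 < xi"
  shows "-((y-g0)^2)/(2 * tau^2 * s1) + -(y^2)/(2 * tau^2 * (xi-s1)) - (-(g0^2)/(2 * tau^2 * xi))
     = -(g0^2 * (xi-s1)/(tau^2 * xi * s1))/2 + g0/(tau^2 * s1) * y + -(y^2)/(2 * (tau^2 * s1 * (xi-s1)/xi))"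
  using assms by (simp add: field_simps) algebra

lemma expo2:
  fixes tau xi g0 s1 y :: real
  assumes "0 < tau" and "0 < xi" and "0 < g0" and "0 < s1" and "s1 < xi"
  shows "-((- y-g0)^2)/(2 * tau^2 * s1) + -(y^2)/(2 * tau^2 * (xi-s1)) - (-(g0^2)/(2 * tau^2 * xi))
     = -(g0^2 * (xi-s1)/(tau^2 * xi * s1))/2 + -(g0/(tau^2 * s1) * y) + -(y^2)/(2 * (tau^2 * s1 * (xi-s1)/xi))"
  using assms by (simp add: field_simps) algebra


lemma alg:
  fixes E P Q R A B t r p sa sd sx y g d2 x :: real
  assumes "0<A" "0<B" "0<t" "0<r" "0<p" "0<sa" "0<sd" "0<sx" "0<g" "0<d2" "0<x" "r*r = 2"
  shows "(E * P * R * A / B / (t * (r * p * sa)) - E * Q * R * A / B / (t * (r * p * sa)))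
         * (y / (t * (r * p * (d2 * sd))) * B) / (g / (t * (r * p * (x * sx))) * A)
       = r * E / ((g * d2 / x * (t * sa * sd / sx)) * p) * y * ((P - Q) / 2) * R"
proof -
  have h2: "(P - Q) / 2 = (P - Q) / (r * r)" using assms by simp
  show ?thesis unfolding h2 using assms(1-11) by (simp add: field_simps)
qed

lemma alg2:
  fixes E P Q R r p m h y :: real
  assumes "0<r" "0<p" "0<m" "0<h" "r*r = 2"
  shows "r * E / (m * h^2 * p) * y * ((P - Q) / 2) * R
     = 1 / (m * h) * (1 * (y * (1 / (r * p * h) * (E * P * R) - 1 / (r * p * h) * (E * Q * R))))"
proof -
  have h2: "(P - Q) / 2 = (P - Q) / (r * r)" using assms by simp
  show ?thesis unfolding h2 using assms(1-4) by (simp add: field_simps power2_eq_square)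
qed

theorem proposition1:
  fixes tau xi g0 s1 :: real
  assumes "0 < tau" and "0 < xi" and "0 < g0" and "0 < s1" and "s1 < xi"
  shows "(\<forall>g1. cond_density tau g0 xi s1 g1 = FN_density g0 xi tau s1 g1)
         \<and> (FN_density g0 xi tau s1 has_integral 1) {0<..}"
proof -
  note a = assms
  define u where "u = s1 / xi"
  define h where "h = tau * sqrt (xi * u * (1 - u))"
  define m where "m = (g0 / tau) * sqrt ((1 - u) / (xi * u))"
  have u1: "xi * u * (1 - u) = s1 * (xi - s1) / xi" using a by (simp add: u_def field_simps)
  have u2: "(1 - u) / (xi * u) = (xi - s1) / (xi * s1)" using a by (simp add: u_def field_simps)
  have p1: "0 < s1 * (xi - s1) / xi" using a by simp
  have p2: "0 < (xi - s1) / (xi * s1)" using a by simp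
  have hpos: "0 < h" unfolding h_def u1 using a p1 by simp
  have mpos: "0 < m" unfolding m_def u2 using a p2 by simp
  have hsq: "h^2 = tau^2 * s1 * (xi - s1) / xi"
    unfolding h_def u1 power_mult_distrib using p1 by simp
  have msq: "m^2 = g0^2 * (xi - s1) / (tau^2 * xi * s1)"
    unfolding m_def u2 power_mult_distrib using p2 a by (simp add: power_divide)
  have mh: "m * h = g0 * (xi - s1) / xi"
  proof (rule power2_eq_imp_eq)
    show "(m * h)^2 = (g0 * (xi - s1) / xi)^2"
      unfolding power_mult_distrib msq hsq using a by (simp add: field_simps power2_eq_square)
  qed (use a hpos mpos in auto)
  have mdh: "m / h = g0 / (tau^2 * s1)"
  proof (rule power2_eq_imp_eq)
    show "(m / h)^2 = (g0 / (tau^2 * s1))^2"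
      unfolding power_divide msq hsq using a by (simp add: field_simps power2_eq_square)
  qed (use a hpos mpos in auto)
  have hexp: "h = tau * sqrt s1 * sqrt (xi - s1) / sqrt xi"
  proof (rule power2_eq_imp_eq)
    show "h^2 = (tau * sqrt s1 * sqrt (xi - s1) / sqrt xi)^2"
      unfolding hsq power_mult_distrib power_divide using a by simp
  qed (use a hpos in auto)
  have FN: "FN_density g0 xi tau s1 y =
     (if 0 < y then sqrt 2 * exp (- (m^2) / 2) / (m * h^2 * sqrt pi)
             * y * sinh (m * y / h) * exp (- (y^2) / (2 * h^2)) else 0)" for y
    unfolding FN_density_def Let_def u_def h_def m_def by simp
  define E where "E = exp (- (m^2) / 2)"
  define R where "R = (\<lambda>y::real. exp (- (y^2) / (2 * h^2)))"
  have sh: "sinh (m * y / h) = (exp (m * y / h) - exp (- (m * y / h))) / 2" for y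
    by (simp add: sinh_def)
  have ex: "- (m^2) / 2 + c * (m * y / h) + - (y^2) / (2 * h^2) = 
      -(m^2) / 2 + c * (m / h) * y + - (y^2) / (2 * h^2)" for c y by simp
  have e3: "exp (a + b + c) = exp a * exp b * exp c" for a b c :: real by (simp add: exp_add)
  have part1: "cond_density tau g0 xi s1 y = FN_density g0 xi tau s1 y" for y
  proof (cases "0 < y")
    case False then show ?thesis unfolding FN cond_density_def by simp
  next
    case True
    define A where "A = exp (-(g0^2) / (2 * tau^2 * xi))"
    define B where "B = exp (-(y^2) / (2 * tau^2 * (xi - s1)))"
    define W1 where "W1 = exp (- ((y - g0)^2) / (2 * tau^2 * s1))"
    define W2 where "W2 = exp (- ((- y - g0)^2) / (2 * tau^2 * s1))"
    have Apos: "0 < A" "0 < B" unfolding A_def B_def by auto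
    have k1: "W1 * B / A = E * exp (m * y / h) * R y"
    proof -
      have "W1 * B / A = exp (-((y-g0)^2)/(2 * tau^2 * s1) + -(y^2)/(2 * tau^2 * (xi-s1)) - (-(g0^2)/(2 * tau^2 * xi)))"
        unfolding W1_def A_def B_def by (simp only: exp_add exp_diff)
      also have "\<dots> = exp (- (m^2) / 2 + m * y / h + - (y^2) / (2 * h^2))"
        unfolding expo1[OF a] using ex[of 1 y] by (simp add: msq mdh hsq)
      finally show ?thesis unfolding E_def R_def by (simp only: e3)
    qed
    have k2: "W2 * B / A = E * exp (- (m * y / h)) * R y"
    proof -
      have "W2 * B / A = exp (-((- y-g0)^2)/(2 * tau^2 * s1) + -(y^2)/(2 * tau^2 * (xi-s1)) - (-(g0^2)/(2 * tau^2 * xi)))"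
        unfolding W2_def A_def B_def by (simp only: exp_add exp_diff)
      also have "\<dots> = exp (- (m^2) / 2 + - (m * y / h) + - (y^2) / (2 * h^2))"
        unfolding expo2[OF a] using ex[of "-1" y] by (simp add: msq mdh hsq)
      finally show ?thesis unfolding E_def R_def by (simp only: e3)
    qed
    have W1e: "W1 = E * exp (m * y / h) * R y * A / B" using k1 Apos by (simp add: field_simps)
    have W2e: "W2 = E * exp (- (m * y / h)) * R y * A / B" using k2 Apos by (simp add: field_simps)
    have sq1: "sqrt (2 * pi * s1) = sqrt 2 * sqrt pi * sqrt s1" by (simp add: real_sqrt_mult)
    have sq2: "sqrt (2 * pi * (xi - s1)^3) = sqrt 2 * sqrt pi * ((xi - s1) * sqrt (xi - s1))"
      using a by (simp add: real_sqrt_mult power3_eq_cube)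
    have sq3: "sqrt (2 * pi * xi^3) = sqrt 2 * sqrt pi * (xi * sqrt xi)"
      using a by (simp add: real_sqrt_mult power3_eq_cube)
    have mh2: "m * h^2 = g0 * (xi - s1) / xi * (tau * sqrt s1 * sqrt (xi - s1) / sqrt xi)"
      by (metis mh hexp power2_eq_square mult.assoc)
    have Rf: "exp (- (y^2) / (2 * h^2)) = R y" by (simp add: R_def)
    have sx: "sqrt xi * sqrt xi = xi" using a by simp
    have ss: "sqrt s1 * sqrt s1 = s1" using a by simp
    have sd: "sqrt (xi - s1) * sqrt (xi - s1) = xi - s1" using a by simp
    have pos: "0 < sqrt xi" "0 < sqrt s1" "0 < sqrt (xi - s1)" "0 < sqrt pi" "0 < sqrt (2::real)"
      using a by auto
    have "cond_density tau g0 xi s1 y =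
       (W1 / (tau * sqrt (2 * pi * s1)) - W2 / (tau * sqrt (2 * pi * s1)))
         * (y / (tau * sqrt (2 * pi * (xi - s1)^3)) * B)
         / (g0 / (tau * sqrt (2 * pi * xi^3)) * A)"
      unfolding cond_density_def killed_kernel_def wiener_kernel_def first_passage_density_def
        W1_def W2_def A_def B_def using True by simp
    also have "\<dots> = FN_density g0 xi tau s1 y"
      unfolding FN if_P[OF True] sh W1e W2e sq1 sq2 sq3 mh2 Rf E_def[symmetric]
      by (rule alg) (use a pos Apos in auto)
    finally show ?thesis .
  qed
  define b where "b = m * h"
  have bpos: "0 < b" unfolding b_def using mpos hpos by simp
  have FN2: "FN_density g0 xi tau s1 y =
     (1 / b) * (indicator {0<..} y * (y * (normal_density b h y - normal_density (-b) h y)))" for y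
  proof (cases "0 < y")
    case False then show ?thesis unfolding FN by simp
  next
    case True
    have n1: "exp (- ((y - m * h)^2) / (2 * h^2)) = E * exp (m * y / h) * R y"
    proof -
      have "- ((y - m * h)^2) / (2 * h^2) = - (m^2) / 2 + m * y / h + - (y^2) / (2 * h^2)"
        unfolding b_def using hpos by (simp add: field_simps power2_eq_square)
      then show ?thesis unfolding E_def R_def by (simp only: e3)
    qed
    have n2: "exp (- ((y - - (m * h))^2) / (2 * h^2)) = E * exp (- (m * y / h)) * R y"
    proof -
      have "- ((y - - (m * h))^2) / (2 * h^2) = - (m^2) / 2 + - (m * y / h) + - (y^2) / (2 * h^2)"
        unfolding b_def using hpos by (simp add: field_simps power2_eq_square)
      then show ?thesis unfolding E_def R_def by (simp only: e3)
    qed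
    have sq: "sqrt (2 * pi * h^2) = sqrt 2 * sqrt pi * h" using hpos by (simp add: real_sqrt_mult)
    have Rf: "exp (- (y^2) / (2 * h^2)) = R y" by (simp add: R_def)
    have ind: "indicator {0<..} y = (1::real)" using True by simp
    have pos: "0 < sqrt pi" "0 < sqrt (2::real)" by auto
    show ?thesis
      unfolding FN if_P[OF True] sh normal_density_def n1 n2 sq Rf ind E_def[symmetric] b_def
      by (rule alg2) (use pos hpos mpos in auto)
  qed
  have "has_bochner_integral lborel
     (\<lambda>y. (1 / b) * (indicator {0<..} y * (y * (normal_density b h y - normal_density (-b) h y)))) ((1 / b) * b)"
    by (intro has_bochner_integral_mult_right half_int bpos hpos)
  then have "has_bochner_integral lborel (FN_density g0 xi tau s1) 1"
    using bpos unfolding FN2[symmetric] by simp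
  then have "(FN_density g0 xi tau s1 has_integral 1) UNIV"
    using has_integral_integral_real by (metis has_bochner_integral_iff)
  moreover have "(\<lambda>y. if y \<in> {0<..} then FN_density g0 xi tau s1 y else 0) = FN_density g0 xi tau s1"
    by (auto simp: fun_eq_iff FN)
  ultimately have "(FN_density g0 xi tau s1 has_integral 1) {0<..}"
    using has_integral_restrict_UNIV[of "{0<..}" "FN_density g0 xi tau s1" 1] by simp
  with part1 show ?thesis by blast
qed

end
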